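(* For any $n\geq 1$ and any group $\mathsf{G}$, there is a strict isomorphism of 2-groups $\mathsf{S}_n\wr\wr\ \mathbb{S}ym(\mathsf{G})\to\mathbb{S}ym\big(\coprod^n\mathsf{G}\big)$, where $\coprod^n\mathsf G$ is the coproduct of $n$ copies of the one-object groupoid $\mathsf G$. Explicitly, writing the objects of $\coprod^n\mathsf G$ as $\ast_1,\dots,\ast_n$, it sends an object $(\sigma,(\phi_1,\dots,\phi_n))$ ($\sigma\in\mathsf S_n$, $\phi_i\in\mathrm{Aut}(\mathsf G)$) to the self-equivalence $(g,\ast_i)\mapsto(\phi_i(g),\ast_{\sigma(i)})$ and a morphism given by $(g_1,\dots,g_n)$ to the natural isomorphism with components $(g_i,\ast_{\sigma(i)})$.
   Context: A 2-group is a monoidal groupoid in which every object has a weak tensor inverse; a strict isomorphism of 2-groups is an isomorphism of the underlying groupoids strictly preserving the tensor product and unit. For a groupoid $\mathcal K$, $\mathbb{S}ym(\mathcal K)$ is the 2-group of self-equivalences of $\mathcal K$ and natural isomorphisms, with tensor given by composition. For a group $\mathsf G$ (one-object groupoid), $\mathbb{S}ym(\mathsf G)$ is (isomorphic to) the strict 2-group with objects the automorphisms $\phi$ of $\mathsf G$, morphisms $\phi\to\tilde\phi$ the elements $g\in\mathsf G$ with $\tilde\phi=c_g\circ\phi$ ($c_g$ conjugation by $g$), composition $\tilde g\circ g=\tilde g g$, tensor $\phi\otimes\phi'=\phi\circ\phi'$ and $g\otimes g'=g\,\phi(g')$ for $g:\phi\to\tilde\phi$, $g':\phi'\to\tilde\phi'$.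 For a 2-group $\mathbb G$, $\mathsf{S}_n\wr\wr\ \mathbb{G}$ is the 2-group with objects $(\sigma,\mathbf x)$, $\sigma\in\mathsf S_n$, $\mathbf x$ an $n$-tuple of objects of $\mathbb G$; morphisms $(\sigma,\mathbf x)\to(\sigma,\mathbf x')$ are $n$-tuples of morphisms $x_i\to x'_i$ (none if the permutations differ); tensor $(\sigma,\mathbf{x})\otimes(\sigma',\mathbf{x}')=(\sigma\sigma',(\mathbf{x}\rhd\sigma')\otimes\mathbf{x}')$ and analogously on morphisms, with $\mathbf{x}\rhd\sigma=(x_{\sigma(1)},\dots,x_{\sigma(n)})$ and componentwise $\otimes$; unit $(id,(e,\dots,e))$; associator and unitors induced componentwise from those of $\mathbb G$ (trivial when $\mathbb G$ is strict). *)

theory Defs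
  imports "HOL-Algebra.Bij" "HOL-Combinatorics.Permutations"
begin

text \<open>A (small) groupoid/category given by a set of objects, a set of arrows,
  source, target, composition (cmp g f = g after f, defined when src g = tgt f)
  and identities.\<close>

record ('o, 'm) gpd =
  Obj  :: "'o set"
  Arr  :: "'m set"
  src  :: "'m \<Rightarrow> 'o"
  tgt  :: "'m \<Rightarrow> 'o"
  cmp  :: "'m \<Rightarrow> 'm \<Rightarrow> 'm"
  idm  :: "'o \<Rightarrow> 'm"

text \<open>Monoidal structure: tensor on objects, on arrows, and unit object.
  (All 2-groups occurring here are strict, so associators/unitors are identities.)\<close>

record ('o, 'm) mgpd = "('o, 'm) gpd" +
  tob   :: "'o \<Rightarrow> 'o \<Rightarrow> 'o"
  tar   :: "'m \<Rightarrow> 'm \<Rightarrow> 'm"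
  tunit :: "'o"

definition is_functor ::
  "('o, 'm, 'x) gpd_scheme \<Rightarrow> ('p, 'n, 'y) gpd_scheme \<Rightarrow> ('o \<Rightarrow> 'p) \<Rightarrow> ('m \<Rightarrow> 'n) \<Rightarrow> bool"
  where "is_functor C D Fo Fm \<longleftrightarrow>
     (\<forall>x\<in>Obj C. Fo x \<in> Obj D) \<and>
     (\<forall>f\<in>Arr C. Fm f \<in> Arr D \<and> src D (Fm f) = Fo (src C f) \<and> tgt D (Fm f) = Fo (tgt C f)) \<and>
     (\<forall>f\<in>Arr C. \<forall>g\<in>Arr C. src C g = tgt C f \<longrightarrow> Fm (cmp C g f) = cmp D (Fm g) (Fm f)) \<and>
     (\<forall>x\<in>Obj C. Fm (idm C x) = idm D (Fo x))"

definition is_iso_arr :: "('o, 'm, 'x) gpd_scheme \<Rightarrow> 'm \<Rightarrow> bool"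
  where "is_iso_arr C f \<longleftrightarrow> f \<in> Arr C \<and>
     (\<exists>g\<in>Arr C. src C g = tgt C f \<and> tgt C g = src C f \<and>
        cmp C g f = idm C (src C f) \<and> cmp C f g = idm C (tgt C f))"

definition nat_iso ::
  "('o, 'm, 'x) gpd_scheme \<Rightarrow> ('p, 'n, 'y) gpd_scheme \<Rightarrow> ('o \<Rightarrow> 'p) \<Rightarrow> ('m \<Rightarrow> 'n)
     \<Rightarrow> ('o \<Rightarrow> 'p) \<Rightarrow> ('m \<Rightarrow> 'n) \<Rightarrow> ('o \<Rightarrow> 'n) \<Rightarrow> bool"
  where "nat_iso C D Fo Fm Go Gm \<alpha> \<longleftrightarrow>
     (\<forall>x\<in>Obj C. \<alpha> x \<in> Arr D \<and> src D (\<alpha> x) = Fo x \<and> tgt D (\<alpha> x) = Go x \<and> is_iso_arr D (\<alpha> x)) \<and>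
     (\<forall>f\<in>Arr C. cmp D (\<alpha> (tgt C f)) (Fm f) = cmp D (Gm f) (\<alpha> (src C f)))"

definition is_self_equivalence :: "('o, 'm, 'x) gpd_scheme \<Rightarrow> ('o \<Rightarrow> 'o) \<Rightarrow> ('m \<Rightarrow> 'm) \<Rightarrow> bool"
  where "is_self_equivalence C Fo Fm \<longleftrightarrow> is_functor C C Fo Fm \<and>
     (\<exists>Ho Hm \<alpha> \<beta>. is_functor C C Ho Hm \<and>
        nat_iso C C (Ho \<circ> Fo) (Hm \<circ> Fm) id id \<alpha> \<and>
        nat_iso C C (Fo \<circ> Ho) (Fm \<circ> Hm) id id \<beta>)"

text \<open>Functors are represented extensionally (undefined off the objects/arrows),
  so that equal functors are equal as HOL values.\<close>
definition sym_obj :: "('o, 'm, 'x) gpd_scheme \<Rightarrow> (('o \<Rightarrow> 'o) \<times> ('m \<Rightarrow> 'm)) set"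
  where "sym_obj K = {(Fo, Fm). Fo \<in> extensional (Obj K) \<and> Fm \<in> extensional (Arr K) \<and>
                                 is_self_equivalence K Fo Fm}"

definition sym_tob :: "('o, 'm, 'x) gpd_scheme \<Rightarrow> ('o \<Rightarrow> 'o) \<times> ('m \<Rightarrow> 'm)
     \<Rightarrow> ('o \<Rightarrow> 'o) \<times> ('m \<Rightarrow> 'm) \<Rightarrow> ('o \<Rightarrow> 'o) \<times> ('m \<Rightarrow> 'm)"
  where "sym_tob K F F' = (compose (Obj K) (fst F) (fst F'), compose (Arr K) (snd F) (snd F'))"

text \<open>Arrows of Sym(K) are triples (F, alpha, G) with alpha : F \<Rightarrow> G a natural isomorphism.
  Tensor on arrows is horizontal composition:
  (alpha * beta)_x = alpha_(G' x) after F(beta_x).\<close>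
definition Sym :: "('o, 'm, 'x) gpd_scheme \<Rightarrow>
   (('o \<Rightarrow> 'o) \<times> ('m \<Rightarrow> 'm),
    (('o \<Rightarrow> 'o) \<times> ('m \<Rightarrow> 'm)) \<times> ('o \<Rightarrow> 'm) \<times> (('o \<Rightarrow> 'o) \<times> ('m \<Rightarrow> 'm))) mgpd"
  where "Sym K = \<lparr>
     Obj = sym_obj K,
     Arr = {(F, \<alpha>, G). F \<in> sym_obj K \<and> G \<in> sym_obj K \<and> \<alpha> \<in> extensional (Obj K) \<and>
                         nat_iso K K (fst F) (snd F) (fst G) (snd G) \<alpha>},
     src = (\<lambda>(F, \<alpha>, G). F),
     tgt = (\<lambda>(F, \<alpha>, G). G),
     cmp = (\<lambda>(F', \<beta>, G') (F, \<alpha>, G). (F, \<lambda>x\<in>Obj K. cmp K (\<beta> x) (\<alpha> x), G')),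
     idm = (\<lambda>F. (F, \<lambda>x\<in>Obj K. idm K (fst F x), F)),
     tob = sym_tob K,
     tar = (\<lambda>(F, \<alpha>, G) (F', \<beta>, G').
              (sym_tob K F F', \<lambda>x\<in>Obj K. cmp K (\<alpha> (fst G' x)) (snd F (\<beta> x)), sym_tob K G G')),
     tunit = (\<lambda>x\<in>Obj K. x, \<lambda>f\<in>Arr K. f) \<rparr>"

text \<open>Objects *_1, ..., *_n are the numbers 1..n; arrows *_i \<rightarrow> *_i are pairs (g, i), g in G;
  composition (g', i) after (g, i) = (g' g, i).\<close>
definition coprod :: "nat \<Rightarrow> ('g, 'b) monoid_scheme \<Rightarrow> (nat, 'g \<times> nat) gpd"
  where "coprod n G = \<lparr>
     Obj = {1..n},
     Arr = carrier G \<times> {1..n},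
     src = snd,
     tgt = snd,
     cmp = (\<lambda>(g', i) (g, j). (g' \<otimes>\<^bsub>G\<^esub> g, i)),
     idm = (\<lambda>i. (\<one>\<^bsub>G\<^esub>, i)) \<rparr>"

definition conj_aut :: "('g, 'b) monoid_scheme \<Rightarrow> 'g \<Rightarrow> ('g \<Rightarrow> 'g) \<Rightarrow> ('g \<Rightarrow> 'g)"
  where "conj_aut G g \<phi> = (\<lambda>x\<in>carrier G. g \<otimes>\<^bsub>G\<^esub> \<phi> x \<otimes>\<^bsub>G\<^esub> inv\<^bsub>G\<^esub> g)"

text \<open>Objects: automorphisms phi. An arrow phi \<rightarrow> c_g o phi is represented by the pair (phi, g).
  Composition g' after g = g' g; tensor phi (x) phi' = phi o phi', g (x) g' = g phi(g').\<close>
definition SymGrp :: "('g, 'b) monoid_scheme \<Rightarrow> ('g \<Rightarrow> 'g, ('g \<Rightarrow> 'g) \<times> 'g) mgpd"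
  where "SymGrp G = \<lparr>
     Obj = auto G,
     Arr = auto G \<times> carrier G,
     src = fst,
     tgt = (\<lambda>(\<phi>, g). conj_aut G g \<phi>),
     cmp = (\<lambda>(\<phi>', g') (\<phi>, g). (\<phi>, g' \<otimes>\<^bsub>G\<^esub> g)),
     idm = (\<lambda>\<phi>. (\<phi>, \<one>\<^bsub>G\<^esub>)),
     tob = (\<lambda>\<phi> \<phi>'. compose (carrier G) \<phi> \<phi>'),
     tar = (\<lambda>(\<phi>, g) (\<phi>', g'). (compose (carrier G) \<phi> \<phi>', g \<otimes>\<^bsub>G\<^esub> \<phi> g')),
     tunit = (\<lambda>x\<in>carrier G. x) \<rparr>"

text \<open>Permutations sigma in S_n are permutations of {1..n}; n-tuples are functions on {1..n}
  (extensional).\<close>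
definition wreath :: "nat \<Rightarrow> ('o, 'm, 'x) mgpd_scheme \<Rightarrow>
     ((nat \<Rightarrow> nat) \<times> (nat \<Rightarrow> 'o), (nat \<Rightarrow> nat) \<times> (nat \<Rightarrow> 'm)) mgpd"
  where "wreath n H = \<lparr>
     Obj = {(\<sigma>, xs). \<sigma> permutes {1..n} \<and> xs \<in> extensional {1..n} \<and> (\<forall>i\<in>{1..n}. xs i \<in> Obj H)},
     Arr = {(\<sigma>, fs). \<sigma> permutes {1..n} \<and> fs \<in> extensional {1..n} \<and> (\<forall>i\<in>{1..n}. fs i \<in> Arr H)},
     src = (\<lambda>(\<sigma>, fs). (\<sigma>, \<lambda>i\<in>{1..n}. src H (fs i))),
     tgt = (\<lambda>(\<sigma>, fs). (\<sigma>, \<lambda>i\<in>{1..n}. tgt H (fs i))),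
     cmp = (\<lambda>(\<sigma>, fs) (\<tau>, gs). (\<sigma>, \<lambda>i\<in>{1..n}. cmp H (fs i) (gs i))),
     idm = (\<lambda>(\<sigma>, xs). (\<sigma>, \<lambda>i\<in>{1..n}. idm H (xs i))),
     tob = (\<lambda>(\<sigma>, xs) (\<sigma>', xs'). (\<sigma> \<circ> \<sigma>', \<lambda>i\<in>{1..n}. tob H (xs (\<sigma>' i)) (xs' i))),
     tar = (\<lambda>(\<sigma>, fs) (\<sigma>', fs'). (\<sigma> \<circ> \<sigma>', \<lambda>i\<in>{1..n}. tar H (fs (\<sigma>' i)) (fs' i))),
     tunit = (id, \<lambda>i\<in>{1..n}. tunit H) \<rparr>"

definition strict_iso ::
  "('o, 'm, 'x) mgpd_scheme \<Rightarrow> ('p, 'n, 'y) mgpd_scheme \<Rightarrow> ('o \<Rightarrow> 'p) \<Rightarrow> ('m \<Rightarrow> 'n) \<Rightarrow> bool"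
  where "strict_iso A B Fo Fm \<longleftrightarrow>
     is_functor A B Fo Fm \<and>
     (\<exists>Go Gm. is_functor B A Go Gm \<and>
        (\<forall>x\<in>Obj A. Go (Fo x) = x) \<and> (\<forall>f\<in>Arr A. Gm (Fm f) = f) \<and>
        (\<forall>y\<in>Obj B. Fo (Go y) = y) \<and> (\<forall>g\<in>Arr B. Fm (Gm g) = g)) \<and>
     (\<forall>x\<in>Obj A. \<forall>y\<in>Obj A. Fo (tob A x y) = tob B (Fo x) (Fo y)) \<and>
     (\<forall>f\<in>Arr A. \<forall>g\<in>Arr A. Fm (tar A f g) = tar B (Fm f) (Fm g)) \<and>
     Fo (tunit A) = tunit B"

definition wr_to_sym_ob :: "nat \<Rightarrow> ('g, 'b) monoid_scheme \<Rightarrow>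
     (nat \<Rightarrow> nat) \<times> (nat \<Rightarrow> ('g \<Rightarrow> 'g)) \<Rightarrow> (nat \<Rightarrow> nat) \<times> ('g \<times> nat \<Rightarrow> 'g \<times> nat)"
  where "wr_to_sym_ob n G = (\<lambda>(\<sigma>, \<phi>s).
     (\<lambda>i\<in>{1..n}. \<sigma> i,
      restrict (\<lambda>(g, i). (\<phi>s i g, \<sigma> i)) (carrier G \<times> {1..n})))"

definition wr_to_sym_ar :: "nat \<Rightarrow> ('g, 'b) monoid_scheme \<Rightarrow>
     (nat \<Rightarrow> nat) \<times> (nat \<Rightarrow> ('g \<Rightarrow> 'g) \<times> 'g) \<Rightarrow>
     ((nat \<Rightarrow> nat) \<times> ('g \<times> nat \<Rightarrow> 'g \<times> nat)) \<times> (nat \<Rightarrow> 'g \<times> nat)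
       \<times> ((nat \<Rightarrow> nat) \<times> ('g \<times> nat \<Rightarrow> 'g \<times> nat))"
  where "wr_to_sym_ar n G = (\<lambda>(\<sigma>, fs).
     (wr_to_sym_ob n G (src (wreath n (SymGrp G)) (\<sigma>, fs)),
      \<lambda>i\<in>{1..n}. (snd (fs i), \<sigma> i),
      wr_to_sym_ob n G (tgt (wreath n (SymGrp G)) (\<sigma>, fs))))"

end

theory Submission
  imports Defs
begin

lemma wreath_simps:
  "Obj (wreath n H) = {(\<sigma>, xs). \<sigma> permutes {1..n} \<and> xs \<in> extensional {1..n} \<and> (\<forall>i\<in>{1..n}. xs i \<in> Obj H)}"
  "Arr (wreath n H) = {(\<sigma>, fs). \<sigma> permutes {1..n} \<and> fs \<in> extensional {1..n} \<and> (\<forall>i\<in>{1..n}. fs i \<in> Arr H)}"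
  "src (wreath n H) (\<sigma>, fs) = (\<sigma>, \<lambda>i\<in>{1..n}. src H (fs i))"
  "tgt (wreath n H) (\<sigma>, fs) = (\<sigma>, \<lambda>i\<in>{1..n}. tgt H (fs i))"
  "cmp (wreath n H) (\<sigma>, fs) (\<tau>, gs) = (\<sigma>, \<lambda>i\<in>{1..n}. cmp H (fs i) (gs i))"
  "idm (wreath n H) (\<sigma>, xs) = (\<sigma>, \<lambda>i\<in>{1..n}. idm H (xs i))"
  "tob (wreath n H) (\<sigma>, xs) (\<sigma>', xs') = (\<sigma> \<circ> \<sigma>', \<lambda>i\<in>{1..n}. tob H (xs (\<sigma>' i)) (xs' i))"
  "tar (wreath n H) (\<sigma>, fs) (\<sigma>', fs') = (\<sigma> \<circ> \<sigma>', \<lambda>i\<in>{1..n}. tar H (fs (\<sigma>' i)) (fs' i))"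
  "tunit (wreath n H) = (id, \<lambda>i\<in>{1..n}. tunit H)"
  by (simp_all add: wreath_def)

lemma SymGrp_simps:
  "Obj (SymGrp G) = auto G"
  "Arr (SymGrp G) = auto G \<times> carrier G"
  "src (SymGrp G) p = fst p"
  "tgt (SymGrp G) p = conj_aut G (snd p) (fst p)"
  "cmp (SymGrp G) p q = (fst q, snd p \<otimes>\<^bsub>G\<^esub> snd q)"
  "idm (SymGrp G) \<phi> = (\<phi>, \<one>\<^bsub>G\<^esub>)"
  "tob (SymGrp G) \<phi> \<phi>' = compose (carrier G) \<phi> \<phi>'"
  "tar (SymGrp G) p q = (compose (carrier G) (fst p) (fst q), snd p \<otimes>\<^bsub>G\<^esub> fst p (snd q))"
  "tunit (SymGrp G) = (\<lambda>x\<in>carrier G. x)"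
  by (simp_all add: SymGrp_def split: prod.splits)

lemma coprod_simps:
  "Obj (coprod n G) = {1..n}"
  "Arr (coprod n G) = carrier G \<times> {1..n}"
  "src (coprod n G) p = snd p"
  "tgt (coprod n G) p = snd p"
  "cmp (coprod n G) p q = (fst p \<otimes>\<^bsub>G\<^esub> fst q, snd p)"
  "idm (coprod n G) i = (\<one>\<^bsub>G\<^esub>, i)"
  by (simp_all add: coprod_def split: prod.splits)

lemma Sym_simps:
  "Obj (Sym K) = sym_obj K"
  "Arr (Sym K) = {(F, \<alpha>, G). F \<in> sym_obj K \<and> G \<in> sym_obj K \<and> \<alpha> \<in> extensional (Obj K) \<and>
                         nat_iso K K (fst F) (snd F) (fst G) (snd G) \<alpha>}"
  "src (Sym K) (F, \<alpha>, G) = F"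
  "tgt (Sym K) (F, \<alpha>, G) = G"
  "cmp (Sym K) (F', \<beta>, G') (F, \<alpha>, G) = (F, \<lambda>x\<in>Obj K. cmp K (\<beta> x) (\<alpha> x), G')"
  "idm (Sym K) F = (F, \<lambda>x\<in>Obj K. idm K (fst F x), F)"
  "tob (Sym K) = sym_tob K"
  "tar (Sym K) (F, \<alpha>, G) (F', \<beta>, G') =
     (sym_tob K F F', \<lambda>x\<in>Obj K. cmp K (\<alpha> (fst G' x)) (snd F (\<beta> x)), sym_tob K G G')"
  "tunit (Sym K) = (\<lambda>x\<in>Obj K. x, \<lambda>f\<in>Arr K. f)"
  by (simp_all add: Sym_def)

lemma inverse_functor:
  assumes F: "is_functor A B Fo Fm"
    and GoO: "\<And>y. y \<in> Obj B \<Longrightarrow> Go y \<in> Obj A"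
    and GmA: "\<And>g. g \<in> Arr B \<Longrightarrow> Gm g \<in> Arr A"
    and i1: "\<And>x. x \<in> Obj A \<Longrightarrow> Go (Fo x) = x"
    and i2: "\<And>y. y \<in> Obj B \<Longrightarrow> Fo (Go y) = y"
    and i3: "\<And>f. f \<in> Arr A \<Longrightarrow> Gm (Fm f) = f"
    and i4: "\<And>g. g \<in> Arr B \<Longrightarrow> Fm (Gm g) = g"
    and cc: "\<And>f g. f \<in> Arr A \<Longrightarrow> g \<in> Arr A \<Longrightarrow> src A g = tgt A f \<Longrightarrow> cmp A g f \<in> Arr A"
    and ic: "\<And>x. x \<in> Obj A \<Longrightarrow> idm A x \<in> Arr A"
    and so: "\<And>f. f \<in> Arr A \<Longrightarrow> src A f \<in> Obj A"
    and to: "\<And>f. f \<in> Arr A \<Longrightarrow> tgt A f \<in> Obj A"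
  shows "is_functor B A Go Gm"
proof -
  have s: "src A (Gm g) = Go (src B g)" if "g \<in> Arr B" for g
  proof -
    have "src A (Gm g) = Go (Fo (src A (Gm g)))" using i1 so GmA that by simp
    also have "Fo (src A (Gm g)) = src B (Fm (Gm g))" using F GmA that unfolding is_functor_def by simp
    finally show ?thesis using i4 that by simp
  qed
  have t: "tgt A (Gm g) = Go (tgt B g)" if "g \<in> Arr B" for g
  proof -
    have "tgt A (Gm g) = Go (Fo (tgt A (Gm g)))" using i1 to GmA that by simp
    also have "Fo (tgt A (Gm g)) = tgt B (Fm (Gm g))" using F GmA that unfolding is_functor_def by simp
    finally show ?thesis using i4 that by simp
  qed
  have c: "Gm (cmp B g f) = cmp A (Gm g) (Gm f)"
    if "f \<in> Arr B" "g \<in> Arr B" "src B g = tgt B f" for f g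
  proof -
    have e: "src A (Gm g) = tgt A (Gm f)" using s t that by simp
    have "Fm (cmp A (Gm g) (Gm f)) = cmp B (Fm (Gm g)) (Fm (Gm f))"
      using F GmA that e unfolding is_functor_def by blast
    hence "Fm (cmp A (Gm g) (Gm f)) = cmp B g f" using i4 that by simp
    hence "Gm (Fm (cmp A (Gm g) (Gm f))) = Gm (cmp B g f)" by simp
    thus ?thesis using i3 cc GmA that e by simp
  qed
  have d: "Gm (idm B y) = idm A (Go y)" if "y \<in> Obj B" for y
  proof -
    have "Fm (idm A (Go y)) = idm B (Fo (Go y))" using F GoO that unfolding is_functor_def by blast
    hence "Fm (idm A (Go y)) = idm B y" using i2 that by simp
    hence "Gm (Fm (idm A (Go y))) = Gm (idm B y)" by simp
    thus ?thesis using i3 ic GoO that by simp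
  qed
  show ?thesis unfolding is_functor_def using GoO GmA s t c d by auto
qed


definition inv_ob :: "nat \<Rightarrow> ('g, 'b) monoid_scheme \<Rightarrow> (nat \<Rightarrow> nat) \<times> ('g \<times> nat \<Rightarrow> 'g \<times> nat)
    \<Rightarrow> (nat \<Rightarrow> nat) \<times> (nat \<Rightarrow> 'g \<Rightarrow> 'g)" where
  "inv_ob n G F = (\<lambda>i. if i \<in> {1..n} then fst F i else i,
                    \<lambda>i\<in>{1..n}. \<lambda>g\<in>carrier G. fst (snd F (g, i)))"

definition inv_ar :: "nat \<Rightarrow> ('g, 'b) monoid_scheme \<Rightarrow>
   ((nat \<Rightarrow> nat) \<times> ('g \<times> nat \<Rightarrow> 'g \<times> nat)) \<times> (nat \<Rightarrow> 'g \<times> nat)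
       \<times> ((nat \<Rightarrow> nat) \<times> ('g \<times> nat \<Rightarrow> 'g \<times> nat)) \<Rightarrow> (nat \<Rightarrow> nat) \<times> (nat \<Rightarrow> ('g \<Rightarrow> 'g) \<times> 'g)" where
  "inv_ar n G a = (fst (inv_ob n G (fst a)), \<lambda>i\<in>{1..n}. (snd (inv_ob n G (fst a)) i, fst (fst (snd a) i)))"

locale wrc = group +
  fixes n :: nat
begin

abbreviation "K \<equiv> coprod n G"

lemma hom_one': "\<psi> \<in> hom G G \<Longrightarrow> \<psi> \<one> = \<one>"
  using hom_one[OF _ is_group is_group] .

lemma hom_inv': "\<psi> \<in> hom G G \<Longrightarrow> x \<in> carrier G \<Longrightarrow> \<psi> (inv x) = inv (\<psi> x)"
  by (rule group_hom.hom_inv) (simp_all add: group_hom_def group_hom_axioms_def is_group)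

lemma coprod_functor:
  assumes "\<And>i. i \<in> {1..n} \<Longrightarrow> \<tau> i \<in> {1..n}" "\<And>i. i \<in> {1..n} \<Longrightarrow> \<psi>s i \<in> hom G G"
  shows "is_functor K K (\<lambda>i\<in>{1..n}. \<tau> i) (restrict (\<lambda>(g,i). (\<psi>s i g, \<tau> i)) (carrier G \<times> {1..n}))"
  unfolding is_functor_def
proof (intro conjI ballI impI)
  fix f assume f: "f \<in> Arr K"
  then obtain g i where gi: "f = (g, i)" "g \<in> carrier G" "i \<in> {1..n}" by (auto simp: coprod_simps)
  have "\<psi>s i g \<in> carrier G" using hom_in_carrier[OF assms(2)[OF gi(3)] gi(2)] .
  then show "restrict (\<lambda>(g,i). (\<psi>s i g, \<tau> i)) (carrier G \<times> {1..n}) f \<in> Arr K"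
    "src K (restrict (\<lambda>(g,i). (\<psi>s i g, \<tau> i)) (carrier G \<times> {1..n}) f) = (\<lambda>i\<in>{1..n}. \<tau> i) (src K f)"
    "tgt K (restrict (\<lambda>(g,i). (\<psi>s i g, \<tau> i)) (carrier G \<times> {1..n}) f) = (\<lambda>i\<in>{1..n}. \<tau> i) (tgt K f)"
    using gi assms(1) by (simp_all add: coprod_simps)
  fix f' assume f': "f' \<in> Arr K" and e: "src K f' = tgt K f"
  then obtain g' where g': "f' = (g', i)" "g' \<in> carrier G" using gi by (cases f') (auto simp: coprod_simps)
  show "restrict (\<lambda>(g,i). (\<psi>s i g, \<tau> i)) (carrier G \<times> {1..n}) (cmp K f' f) =
        cmp K (restrict (\<lambda>(g,i). (\<psi>s i g, \<tau> i)) (carrier G \<times> {1..n}) f') (restrict (\<lambda>(g,i). (\<psi>s i g, \<tau> i)) (carrier G \<times> {1..n}) f)"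
    using gi g' hom_mult[OF assms(2)[OF gi(3)]] by (simp add: coprod_simps)
next
  fix x assume "x \<in> Obj K"
  then show "(\<lambda>i\<in>{1..n}. \<tau> i) x \<in> Obj K"
    "restrict (\<lambda>(g,i). (\<psi>s i g, \<tau> i)) (carrier G \<times> {1..n}) (idm K x) = idm K ((\<lambda>i\<in>{1..n}. \<tau> i) x)"
    using assms(1) hom_one'[OF assms(2)] by (simp_all add: coprod_simps)
qed

lemma coprod_self_equiv:
  assumes t1: "\<And>i. i \<in> {1..n} \<Longrightarrow> \<tau> i \<in> {1..n}" and h1: "\<And>i. i \<in> {1..n} \<Longrightarrow> \<psi>s i \<in> hom G G"
    and t2: "\<And>i. i \<in> {1..n} \<Longrightarrow> \<tau>' i \<in> {1..n}" and h2: "\<And>i. i \<in> {1..n} \<Longrightarrow> \<psi>s' i \<in> hom G G"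
    and e1: "\<And>i. i \<in> {1..n} \<Longrightarrow> \<tau>' (\<tau> i) = i" and e2: "\<And>i. i \<in> {1..n} \<Longrightarrow> \<tau> (\<tau>' i) = i"
    and e3: "\<And>i g. i \<in> {1..n} \<Longrightarrow> g \<in> carrier G \<Longrightarrow> \<psi>s' (\<tau> i) (\<psi>s i g) = g"
    and e4: "\<And>i g. i \<in> {1..n} \<Longrightarrow> g \<in> carrier G \<Longrightarrow> \<psi>s (\<tau>' i) (\<psi>s' i g) = g"
  shows "is_self_equivalence K (\<lambda>i\<in>{1..n}. \<tau> i) (restrict (\<lambda>(g,i). (\<psi>s i g, \<tau> i)) (carrier G \<times> {1..n}))"
proof -
  let ?Fo = "\<lambda>i\<in>{1..n}. \<tau> i" and ?Fm = "restrict (\<lambda>(g,i). (\<psi>s i g, \<tau> i)) (carrier G \<times> {1..n})"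
  let ?Ho = "\<lambda>i\<in>{1..n}. \<tau>' i" and ?Hm = "restrict (\<lambda>(g,i). (\<psi>s' i g, \<tau>' i)) (carrier G \<times> {1..n})"
  have hc1: "\<psi>s i g \<in> carrier G" if "i \<in> {1..n}" "g \<in> carrier G" for i g
    using hom_in_carrier[OF h1[OF that(1)] that(2)] .
  have hc2: "\<psi>s' i g \<in> carrier G" if "i \<in> {1..n}" "g \<in> carrier G" for i g
    using hom_in_carrier[OF h2[OF that(1)] that(2)] .
  have iso: "is_iso_arr K (\<one>, x)" if "x \<in> {1..n}" for x
  proof -
    have m: "(\<one>, x) \<in> Arr K" using that by (simp add: coprod_simps)
    show ?thesis unfolding is_iso_arr_def using m
      by (intro conjI bexI[of _ "(\<one>, x)"]) (simp_all add: coprod_simps)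
  qed
  have n1: "nat_iso K K (?Ho \<circ> ?Fo) (?Hm \<circ> ?Fm) id id (\<lambda>x. (\<one>, x))"
    unfolding nat_iso_def
  proof (intro conjI ballI)
    fix f assume f: "f \<in> Arr K"
    then obtain g i where gi: "f = (g, i)" "g \<in> carrier G" "i \<in> {1..n}" by (auto simp: coprod_simps)
    have eq: "(?Hm \<circ> ?Fm) f = f" using gi t1 e1 e3 hc1 by simp
    show "cmp K ((\<lambda>x. (\<one>, x)) (tgt K f)) ((?Hm \<circ> ?Fm) f) = cmp K (id f) ((\<lambda>x. (\<one>, x)) (src K f))"
      unfolding eq using gi by (simp add: coprod_simps)
  next
    fix x assume x: "x \<in> Obj K"
    then show "(\<one>, x) \<in> Arr K" "is_iso_arr K (\<one>, x)" "tgt K (\<one>, x) = id x"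
      using iso by (simp_all add: coprod_simps)
    show "src K (\<one>, x) = (?Ho \<circ> ?Fo) x" using x t1 e1 by (simp add: coprod_simps)
  qed
  have n2: "nat_iso K K (?Fo \<circ> ?Ho) (?Fm \<circ> ?Hm) id id (\<lambda>x. (\<one>, x))"
    unfolding nat_iso_def
  proof (intro conjI ballI)
    fix f assume f: "f \<in> Arr K"
    then obtain g i where gi: "f = (g, i)" "g \<in> carrier G" "i \<in> {1..n}" by (auto simp: coprod_simps)
    have eq: "(?Fm \<circ> ?Hm) f = f" using gi t2 e2 e4 hc2 by simp
    show "cmp K ((\<lambda>x. (\<one>, x)) (tgt K f)) ((?Fm \<circ> ?Hm) f) = cmp K (id f) ((\<lambda>x. (\<one>, x)) (src K f))"
      unfolding eq using gi by (simp add: coprod_simps)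
  next
    fix x assume x: "x \<in> Obj K"
    then show "(\<one>, x) \<in> Arr K" "is_iso_arr K (\<one>, x)" "tgt K (\<one>, x) = id x"
      using iso by (simp_all add: coprod_simps)
    show "src K (\<one>, x) = (?Fo \<circ> ?Ho) x" using x t2 e2 by (simp add: coprod_simps)
  qed
  have F1: "is_functor K K ?Fo ?Fm" by (rule coprod_functor[OF t1 h1])
  have F2: "is_functor K K ?Ho ?Hm" by (rule coprod_functor[OF t2 h2])
  show ?thesis unfolding is_self_equivalence_def
    apply (rule conjI[OF F1])
    apply (rule exI[of _ ?Ho], rule exI[of _ ?Hm], rule exI[of _ "\<lambda>x. (\<one>, x)"], rule exI[of _ "\<lambda>x. (\<one>, x)"])
    using F2 n1 n2 by blast
qed


lemma lcancel: "x \<in> carrier G \<Longrightarrow> y \<in> carrier G \<Longrightarrow> z \<in> carrier G \<Longrightarrow> x \<otimes> y = x \<otimes> z \<longleftrightarrow> y = z"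
  by (metis Units_eq Units_l_cancel)

lemma auto_hom: "\<phi> \<in> auto G \<Longrightarrow> \<phi> \<in> hom G G" by (simp add: auto_def)
lemma auto_bij: "\<phi> \<in> auto G \<Longrightarrow> bij_betw \<phi> (carrier G) (carrier G)" by (simp add: auto_def Bij_def)
lemma auto_ext: "\<phi> \<in> auto G \<Longrightarrow> \<phi> \<in> extensional (carrier G)" by (simp add: auto_def Bij_def)
lemma auto_carr: "\<phi> \<in> auto G \<Longrightarrow> x \<in> carrier G \<Longrightarrow> \<phi> x \<in> carrier G"
  using hom_in_carrier[OF auto_hom] by blast

lemma ob_fwd:
  assumes "x \<in> Obj (wreath n (SymGrp G))"
  shows "wr_to_sym_ob n G x \<in> sym_obj K"
proof -
  obtain \<sigma> \<phi>s where x: "x = (\<sigma>, \<phi>s)" by (cases x)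
  have perm: "\<sigma> permutes {1..n}" and aut: "\<And>i. i \<in> {1..n} \<Longrightarrow> \<phi>s i \<in> auto G"
    using assms x by (auto simp: wreath_simps SymGrp_simps)
  define \<psi>s' where "\<psi>s' = (\<lambda>i. restrict (inv_into (carrier G) (\<phi>s (inv_into UNIV \<sigma> i))) (carrier G))"
  have ip: "inv_into UNIV \<sigma> permutes {1..n}" by (rule permutes_inv[OF perm])
  have ii: "\<And>i. i \<in> {1..n} \<Longrightarrow> inv_into UNIV \<sigma> i \<in> {1..n}" using permutes_in_image[OF ip] by blast
  have se: "is_self_equivalence K (\<lambda>i\<in>{1..n}. \<sigma> i) (restrict (\<lambda>(g,i). (\<phi>s i g, \<sigma> i)) (carrier G \<times> {1..n}))"
  proof (rule coprod_self_equiv[where \<tau>' = "inv_into UNIV \<sigma>" and \<psi>s' = \<psi>s'])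
    show "\<And>i. i \<in> {1..n} \<Longrightarrow> \<sigma> i \<in> {1..n}" using permutes_in_image[OF perm] by blast
    show "\<And>i. i \<in> {1..n} \<Longrightarrow> \<phi>s i \<in> hom G G" using auto_hom[OF aut] .
    show "\<And>i. i \<in> {1..n} \<Longrightarrow> inv_into UNIV \<sigma> i \<in> {1..n}" by (rule ii)
    show "\<psi>s' i \<in> hom G G" if "i \<in> {1..n}" for i
      unfolding \<psi>s'_def using aut[OF ii[OF that]] restrict_inv_into_hom by (simp add: auto_def)
    show "\<And>i. i \<in> {1..n} \<Longrightarrow> inv_into UNIV \<sigma> (\<sigma> i) = i" by (simp add: permutes_inverses[OF perm])
    show "\<And>i. i \<in> {1..n} \<Longrightarrow> \<sigma> (inv_into UNIV \<sigma> i) = i" by (simp add: permutes_inverses[OF perm])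
    show "\<psi>s' (\<sigma> i) (\<phi>s i g) = g" if "i \<in> {1..n}" "g \<in> carrier G" for i g
    proof -
      have "inv_into UNIV \<sigma> (\<sigma> i) = i" by (simp add: permutes_inverses[OF perm])
      moreover have "inj_on (\<phi>s i) (carrier G)" using auto_bij[OF aut[OF that(1)]] bij_betw_def by blast
      ultimately show ?thesis unfolding \<psi>s'_def using that auto_carr[OF aut[OF that(1)]]
        by (simp add: inv_into_f_f)
    qed
    show "\<phi>s (inv_into UNIV \<sigma> i) (\<psi>s' i g) = g" if "i \<in> {1..n}" "g \<in> carrier G" for i g
    proof -
      have "g \<in> \<phi>s (inv_into UNIV \<sigma> i) ` carrier G" using auto_bij[OF aut[OF ii[OF that(1)]]] that(2)
        by (simp add: bij_betw_def)
      thus ?thesis unfolding \<psi>s'_def using that by (simp add: f_inv_into_f)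
    qed
  qed
  show ?thesis using se unfolding x wr_to_sym_ob_def sym_obj_def by (simp add: coprod_simps)
qed

lemma ob_analysis:
  assumes "y \<in> sym_obj K"
  shows "fst y \<in> extensional {1..n}" "snd y \<in> extensional (carrier G \<times> {1..n})"
    "bij_betw (fst y) {1..n} {1..n}"
    "\<And>g i. g \<in> carrier G \<Longrightarrow> i \<in> {1..n} \<Longrightarrow> snd y (g, i) = (fst (snd y (g, i)), fst y i)"
    "\<And>g i. g \<in> carrier G \<Longrightarrow> i \<in> {1..n} \<Longrightarrow> fst (snd y (g, i)) \<in> carrier G"
    "\<And>i. i \<in> {1..n} \<Longrightarrow> (\<lambda>g\<in>carrier G. fst (snd y (g, i))) \<in> auto G"
proof -
  obtain Fo Fm where y: "y = (Fo, Fm)" by (cases y)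
  have ex: "Fo \<in> extensional {1..n}" "Fm \<in> extensional (carrier G \<times> {1..n})"
    and se: "is_self_equivalence K Fo Fm" using assms y by (auto simp: sym_obj_def coprod_simps)
  then show "fst y \<in> extensional {1..n}" "snd y \<in> extensional (carrier G \<times> {1..n})" using y by auto
  have F: "is_functor K K Fo Fm" using se is_self_equivalence_def by blast
  obtain Ho Hm \<alpha> \<beta> where H: "is_functor K K Ho Hm"
     and a: "nat_iso K K (Ho \<circ> Fo) (Hm \<circ> Fm) id id \<alpha>"
     and b: "nat_iso K K (Fo \<circ> Ho) (Fm \<circ> Hm) id id \<beta>"
    using se is_self_equivalence_def by blast
  have Fo: "\<And>i. i \<in> {1..n} \<Longrightarrow> Fo i \<in> {1..n}" using F by (simp add: is_functor_def coprod_simps)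
  have Ho: "\<And>i. i \<in> {1..n} \<Longrightarrow> Ho i \<in> {1..n}" using H by (simp add: is_functor_def coprod_simps)
  have Fm: "\<And>g i. g \<in> carrier G \<Longrightarrow> i \<in> {1..n} \<Longrightarrow> Fm (g, i) \<in> carrier G \<times> {1..n} \<and> snd (Fm (g, i)) = Fo i"
    using F unfolding is_functor_def coprod_simps by auto
  have Hm: "\<And>g i. g \<in> carrier G \<Longrightarrow> i \<in> {1..n} \<Longrightarrow> Hm (g, i) \<in> carrier G \<times> {1..n} \<and> snd (Hm (g, i)) = Ho i"
    using H unfolding is_functor_def coprod_simps by auto
  have Fc: "\<And>x z i. x \<in> carrier G \<Longrightarrow> z \<in> carrier G \<Longrightarrow> i \<in> {1..n} \<Longrightarrow>
      Fm (x \<otimes> z, i) = (fst (Fm (x, i)) \<otimes> fst (Fm (z, i)), snd (Fm (x, i)))"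
    using F unfolding is_functor_def coprod_simps by auto
  have aO': "\<And>x. x \<in> {1..n} \<Longrightarrow> \<alpha> x \<in> carrier G \<times> {1..n} \<and> snd (\<alpha> x) = (Ho \<circ> Fo) x \<and> snd (\<alpha> x) = id x"
    using a unfolding nat_iso_def coprod_simps by blast
  have bO': "\<And>x. x \<in> {1..n} \<Longrightarrow> \<beta> x \<in> carrier G \<times> {1..n} \<and> snd (\<beta> x) = (Fo \<circ> Ho) x \<and> snd (\<beta> x) = id x"
    using b unfolding nat_iso_def coprod_simps by blast
  have aO: "\<And>x. x \<in> {1..n} \<Longrightarrow> \<alpha> x \<in> carrier G \<times> {1..n}"
    using aO' by blast
  have bO: "\<And>x. x \<in> {1..n} \<Longrightarrow> \<beta> x \<in> carrier G \<times> {1..n}"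
    using bO' by blast
  have aN: "\<And>g i. g \<in> carrier G \<Longrightarrow> i \<in> {1..n} \<Longrightarrow> fst (\<alpha> i) \<otimes> fst (Hm (Fm (g, i))) = g \<otimes> fst (\<alpha> i)"
    using a unfolding nat_iso_def coprod_simps by auto
  have bN: "\<And>g i. g \<in> carrier G \<Longrightarrow> i \<in> {1..n} \<Longrightarrow> fst (\<beta> i) \<otimes> fst (Fm (Hm (g, i))) = g \<otimes> fst (\<beta> i)"
    using b unfolding nat_iso_def coprod_simps by auto
  have HF: "\<And>i. i \<in> {1..n} \<Longrightarrow> Ho (Fo i) = i" using aO' by (metis comp_apply id_apply)
  have FH: "\<And>i. i \<in> {1..n} \<Longrightarrow> Fo (Ho i) = i" using bO' by (metis comp_apply id_apply)
  show "bij_betw (fst y) {1..n} {1..n}" unfolding y fst_conv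
    by (rule bij_betw_byWitness[where f' = Ho]) (use HF FH Fo Ho in auto)
  show sh: "snd y (g, i) = (fst (snd y (g, i)), fst y i)" if "g \<in> carrier G" "i \<in> {1..n}" for g i
    using Fm[of g i] that y by (cases "Fm (g, i)") auto
  show cr: "fst (snd y (g, i)) \<in> carrier G" if "g \<in> carrier G" "i \<in> {1..n}" for g i
    using Fm[of g i] that y by auto
  show "(\<lambda>g\<in>carrier G. fst (snd y (g, i))) \<in> auto G" if i: "i \<in> {1..n}" for i
  proof -
    let ?\<phi> = "\<lambda>g\<in>carrier G. fst (Fm (g, i))"
    have hom: "?\<phi> \<in> hom G G"
    proof (rule homI)
      show "?\<phi> x \<in> carrier G" if "x \<in> carrier G" for x using cr[OF that i] y that by simp
      show "?\<phi> (x \<otimes> z) = ?\<phi> x \<otimes> ?\<phi> z" if "x \<in> carrier G" "z \<in> carrier G" for x z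
        using Fc[of x z i] that i by simp
    qed
    have inj: "inj_on ?\<phi> (carrier G)"
    proof (rule inj_onI)
      fix k k' assume k: "k \<in> carrier G" "k' \<in> carrier G" and e: "?\<phi> k = ?\<phi> k'"
      have "Fm (k, i) = Fm (k', i)" using e k sh[of k i] sh[of k' i] y i by (auto simp: prod_eq_iff)
      hence "fst (\<alpha> i) \<otimes> fst (Hm (Fm (k, i))) = fst (\<alpha> i) \<otimes> fst (Hm (Fm (k', i)))" by simp
      hence "k \<otimes> fst (\<alpha> i) = k' \<otimes> fst (\<alpha> i)" using aN[of k i] aN[of k' i] k i by simp
      moreover have "fst (\<alpha> i) \<in> carrier G" using aO[OF i] by auto
      ultimately show "k = k'" using k by simp
    qed
    have surj: "?\<phi> ` carrier G = carrier G"
    proof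
      show "?\<phi> ` carrier G \<subseteq> carrier G" using hom_in_carrier[OF hom] by auto
      show "carrier G \<subseteq> ?\<phi> ` carrier G"
      proof
        fix z assume z: "z \<in> carrier G"
        define j where "j = Fo i"
        have j: "j \<in> {1..n}" using Fo i j_def by simp
        define bb where "bb = fst (\<beta> j)"
        have bb: "bb \<in> carrier G" using bO[OF j] bb_def by auto
        define m where "m = bb \<otimes> z \<otimes> inv bb"
        have m: "m \<in> carrier G" using bb z m_def by simp
        have hm: "Hm (m, j) \<in> carrier G \<times> {1..n}" "snd (Hm (m, j)) = i"
          using Hm[of m j] m j HF[OF i] j_def by auto
        define k where "k = fst (Hm (m, j))"
        have k: "k \<in> carrier G" using hm k_def by auto
        have hmk: "Hm (m, j) = (k, i)" using hm k_def by (simp add: prod_eq_iff)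
        have "bb \<otimes> fst (Fm (k, i)) = m \<otimes> bb" using bN[of m j] m j hmk bb_def by simp
        also have "\<dots> = bb \<otimes> z" using bb z m_def by (simp add: m_assoc)
        finally have "fst (Fm (k, i)) = z" using bb z cr[OF k i] y lcancel by simp
        thus "z \<in> ?\<phi> ` carrier G" by (intro image_eqI[of _ _ k]) (use k in simp_all)
      qed
    qed
    have "?\<phi> \<in> extensional (carrier G)" by (rule restrict_extensional)
    hence "?\<phi> \<in> auto G" unfolding auto_def Bij_def bij_betw_def
      using hom inj surj by blast
    thus ?thesis unfolding y snd_conv .
  qed
qed


lemma inv_cancel_l: "x \<in> carrier G \<Longrightarrow> y \<in> carrier G \<Longrightarrow> inv x \<otimes> (x \<otimes> y) = y"
  by (simp add: m_assoc[symmetric])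
lemma inv_cancel_r: "x \<in> carrier G \<Longrightarrow> y \<in> carrier G \<Longrightarrow> x \<otimes> (inv x \<otimes> y) = y"
  by (simp add: m_assoc[symmetric])

lemma conj_aut_apply: "x \<in> carrier G \<Longrightarrow> conj_aut G g \<phi> x = g \<otimes> \<phi> x \<otimes> inv g"
  by (simp add: conj_aut_def)

lemma conj_aut_auto:
  assumes ph: "\<phi> \<in> auto G" and g: "g \<in> carrier G"
  shows "conj_aut G g \<phi> \<in> auto G"
proof -
  have c: "\<And>x. x \<in> carrier G \<Longrightarrow> \<phi> x \<in> carrier G" using auto_carr[OF ph] .
  have hm: "\<And>x y. x \<in> carrier G \<Longrightarrow> y \<in> carrier G \<Longrightarrow> \<phi> (x \<otimes> y) = \<phi> x \<otimes> \<phi> y"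
    using hom_mult[OF auto_hom[OF ph]] .
  have hom: "conj_aut G g \<phi> \<in> hom G G"
  proof (rule homI)
    show "conj_aut G g \<phi> x \<in> carrier G" if "x \<in> carrier G" for x
      using that g c by (simp add: conj_aut_apply)
    show "conj_aut G g \<phi> (x \<otimes> y) = conj_aut G g \<phi> x \<otimes> conj_aut G g \<phi> y"
      if "x \<in> carrier G" "y \<in> carrier G" for x y
      using that g c hm by (simp add: conj_aut_apply m_assoc inv_cancel_l)
  qed
  have bij: "bij_betw \<phi> (carrier G) (carrier G)" using auto_bij[OF ph] .
  have inj: "inj_on \<phi> (carrier G)" and im: "\<phi> ` carrier G = carrier G" using bij unfolding bij_betw_def by auto
  let ?f' = "\<lambda>y. inv_into (carrier G) \<phi> (inv g \<otimes> y \<otimes> g)"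
  have bc: "bij_betw (conj_aut G g \<phi>) (carrier G) (carrier G)"
  proof (rule bij_betw_byWitness[where f' = ?f'])
    show "\<forall>a\<in>carrier G. ?f' (conj_aut G g \<phi> a) = a"
    proof
      fix a assume a: "a \<in> carrier G"
      have "inv g \<otimes> conj_aut G g \<phi> a \<otimes> g = \<phi> a" using a g c by (simp add: conj_aut_apply m_assoc inv_cancel_l)
      thus "?f' (conj_aut G g \<phi> a) = a" using inv_into_f_f[OF inj a] by simp
    qed
    show "\<forall>a'\<in>carrier G. conj_aut G g \<phi> (?f' a') = a'"
    proof
      fix y assume y: "y \<in> carrier G"
      have z: "inv g \<otimes> y \<otimes> g \<in> carrier G" using y g by simp
      hence "inv g \<otimes> y \<otimes> g \<in> \<phi> ` carrier G" using im by simp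
      hence e: "\<phi> (?f' y) = inv g \<otimes> y \<otimes> g" by (rule f_inv_into_f)
      have m: "?f' y \<in> carrier G" using inv_into_into[of "inv g \<otimes> y \<otimes> g" \<phi> "carrier G"] z im by simp
      show "conj_aut G g \<phi> (?f' y) = y" using m e y g by (simp add: conj_aut_apply m_assoc inv_cancel_r)
    qed
    show "conj_aut G g \<phi> ` carrier G \<subseteq> carrier G" using g c by (auto simp: conj_aut_apply)
    show "?f' ` carrier G \<subseteq> carrier G"
    proof
      fix x assume "x \<in> ?f' ` carrier G"
      then obtain y where y: "y \<in> carrier G" "x = ?f' y" by blast
      have z: "inv g \<otimes> y \<otimes> g \<in> carrier G" using y g by simp
      show "x \<in> carrier G" using inv_into_into[of "inv g \<otimes> y \<otimes> g" \<phi> "carrier G"] z im y by simp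
    qed
  qed
  have ext: "conj_aut G g \<phi> \<in> extensional (carrier G)" unfolding conj_aut_def by (rule restrict_extensional)
  show ?thesis unfolding auto_def Bij_def using hom bc ext by blast
qed

lemma conj_aut_one: "\<phi> \<in> auto G \<Longrightarrow> conj_aut G \<one> \<phi> = \<phi>"
proof
  fix x assume ph: "\<phi> \<in> auto G"
  show "conj_aut G \<one> \<phi> x = \<phi> x"
  proof (cases "x \<in> carrier G")
    case True thus ?thesis using auto_carr[OF ph True] by (simp add: conj_aut_apply)
  next
    case False thus ?thesis using auto_ext[OF ph] by (simp add: conj_aut_def extensional_def)
  qed
qed

lemma conj_aut_mult:
  assumes a: "a \<in> carrier G" and b: "b \<in> carrier G" and c: "\<And>x. x \<in> carrier G \<Longrightarrow> \<phi> x \<in> carrier G"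
  shows "conj_aut G (a \<otimes> b) \<phi> = conj_aut G a (conj_aut G b \<phi>)"
proof
  fix x show "conj_aut G (a \<otimes> b) \<phi> x = conj_aut G a (conj_aut G b \<phi>) x"
  proof (cases "x \<in> carrier G")
    case True
    have "conj_aut G b \<phi> x \<in> carrier G" using True b c by (simp add: conj_aut_apply)
    thus ?thesis using True a b c by (simp add: conj_aut_apply m_assoc inv_mult_group)
  next
    case False thus ?thesis by (simp add: conj_aut_def)
  qed
qed

lemma conj_aut_compose:
  assumes ph: "\<phi> \<in> auto G" and ph': "\<phi>' \<in> auto G" and g: "g \<in> carrier G" and g': "g' \<in> carrier G"
  shows "conj_aut G (g \<otimes> \<phi> g') (compose (carrier G) \<phi> \<phi>') =
         compose (carrier G) (conj_aut G g \<phi>) (conj_aut G g' \<phi>')"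
proof
  fix x show "conj_aut G (g \<otimes> \<phi> g') (compose (carrier G) \<phi> \<phi>') x =
         compose (carrier G) (conj_aut G g \<phi>) (conj_aut G g' \<phi>') x"
  proof (cases "x \<in> carrier G")
    case True
    have c: "\<And>x. x \<in> carrier G \<Longrightarrow> \<phi> x \<in> carrier G" using auto_carr[OF ph] .
    have c': "\<And>x. x \<in> carrier G \<Longrightarrow> \<phi>' x \<in> carrier G" using auto_carr[OF ph'] .
    have hm: "\<And>x y. x \<in> carrier G \<Longrightarrow> y \<in> carrier G \<Longrightarrow> \<phi> (x \<otimes> y) = \<phi> x \<otimes> \<phi> y"
      using hom_mult[OF auto_hom[OF ph]] .
    have hi: "\<phi> (inv g') = inv (\<phi> g')" using hom_inv'[OF auto_hom[OF ph] g'] .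
    have in1: "g' \<otimes> \<phi>' x \<otimes> inv g' \<in> carrier G" using g' c' True by simp
    show ?thesis using True g g' c c' hm hi in1
      by (simp add: conj_aut_apply compose_def m_assoc inv_mult_group)
  next
    case False thus ?thesis by (simp add: conj_aut_def compose_def)
  qed
qed

lemma wr_ob_eq: "wr_to_sym_ob n G (\<sigma>, \<phi>s) =
    (\<lambda>i\<in>{1..n}. \<sigma> i, restrict (\<lambda>(g, i). (\<phi>s i g, \<sigma> i)) (carrier G \<times> {1..n}))"
  by (simp add: wr_to_sym_ob_def)

lemma wr_ob_fst: "i \<in> {1..n} \<Longrightarrow> fst (wr_to_sym_ob n G (\<sigma>, \<phi>s)) i = \<sigma> i"
  by (simp add: wr_to_sym_ob_def)

lemma wr_ob_snd: "k \<in> carrier G \<Longrightarrow> i \<in> {1..n} \<Longrightarrow> snd (wr_to_sym_ob n G (\<sigma>, \<phi>s)) (k, i) = (\<phi>s i k, \<sigma> i)"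
  by (simp add: wr_to_sym_ob_def)

abbreviation "WA \<equiv> wreath n (SymGrp G)"
abbreviation "SB \<equiv> Sym K"

lemma WA_Obj: "(\<sigma>, \<phi>s) \<in> Obj WA \<longleftrightarrow> \<sigma> permutes {1..n} \<and> \<phi>s \<in> extensional {1..n} \<and> (\<forall>i\<in>{1..n}. \<phi>s i \<in> auto G)"
  by (simp add: wreath_simps SymGrp_simps)

lemma WA_Arr: "(\<sigma>, fs) \<in> Arr WA \<longleftrightarrow> \<sigma> permutes {1..n} \<and> fs \<in> extensional {1..n} \<and> (\<forall>i\<in>{1..n}. fst (fs i) \<in> auto G \<and> snd (fs i) \<in> carrier G)"
  by (auto simp: wreath_simps SymGrp_simps mem_Times_iff)

lemma ob_back:
  assumes y: "y \<in> sym_obj K"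
  shows "inv_ob n G y \<in> Obj WA" "wr_to_sym_ob n G (inv_ob n G y) = y"
proof -
  obtain Fo Fm where yy: "y = (Fo, Fm)" by (cases y)
  note an = ob_analysis[OF y, unfolded yy fst_conv snd_conv]
  define \<sigma> where "\<sigma> = (\<lambda>i. if i \<in> {1..n} then Fo i else i)"
  define \<phi>s where "\<phi>s = (\<lambda>i\<in>{1..n}. \<lambda>g\<in>carrier G. fst (Fm (g, i)))"
  have io: "inv_ob n G y = (\<sigma>, \<phi>s)" by (simp only: inv_ob_def yy fst_conv snd_conv \<sigma>_def \<phi>s_def)
  have "bij_betw \<sigma> {1..n} {1..n}" using an(3) by (rule bij_betw_cong[THEN iffD1, rotated]) (simp add: \<sigma>_def)
  hence perm: "\<sigma> permutes {1..n}" by (rule bij_imp_permutes) (simp add: \<sigma>_def del: atLeastAtMost_iff)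
  have "\<phi>s \<in> extensional {1..n}" unfolding \<phi>s_def by (rule restrict_extensional)
  moreover have "\<forall>i\<in>{1..n}. \<phi>s i \<in> auto G" using an(6) by (simp add: \<phi>s_def)
  ultimately show "inv_ob n G y \<in> Obj WA" unfolding io WA_Obj using perm by blast
  have e1: "(\<lambda>i\<in>{1..n}. \<sigma> i) = Fo"
  proof
    fix i show "(\<lambda>i\<in>{1..n}. \<sigma> i) i = Fo i"
      using extensional_arb[OF an(1), of i] by (cases "i \<in> {1..n}") (simp_all add: \<sigma>_def del: atLeastAtMost_iff)
  qed
  have e2: "restrict (\<lambda>(g, i). (\<phi>s i g, \<sigma> i)) (carrier G \<times> {1..n}) = Fm"
  proof
    fix p show "restrict (\<lambda>(g, i). (\<phi>s i g, \<sigma> i)) (carrier G \<times> {1..n}) p = Fm p"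
    proof (cases "p \<in> carrier G \<times> {1..n}")
      case True
      then obtain g i where p: "p = (g, i)" "g \<in> carrier G" "i \<in> {1..n}" by blast
      show ?thesis using an(4)[OF p(2,3)] p by (simp add: \<phi>s_def \<sigma>_def)
    next
      case False thus ?thesis using extensional_arb[OF an(2) False] by simp
    qed
  qed
  have "wr_to_sym_ob n G (\<sigma>, \<phi>s) = (Fo, Fm)" unfolding wr_ob_eq by (simp only: e1 e2)
  thus "wr_to_sym_ob n G (inv_ob n G y) = y" using io yy by simp
qed

lemma ob_back2:
  assumes x: "x \<in> Obj WA"
  shows "inv_ob n G (wr_to_sym_ob n G x) = x"
proof -
  obtain \<sigma> \<phi>s where xx: "x = (\<sigma>, \<phi>s)" by (cases x)
  have perm: "\<sigma> permutes {1..n}" and ex: "\<phi>s \<in> extensional {1..n}" and au: "\<And>i. i \<in> {1..n} \<Longrightarrow> \<phi>s i \<in> auto G"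
    using x unfolding xx WA_Obj by auto
  have e1: "(\<lambda>i. if i \<in> {1..n} then fst (wr_to_sym_ob n G x) i else i) = \<sigma>"
  proof
    fix i show "(if i \<in> {1..n} then fst (wr_to_sym_ob n G x) i else i) = \<sigma> i"
      using permutes_not_in[OF perm, of i] by (simp add: xx wr_ob_fst)
  qed
  have e2: "(\<lambda>i\<in>{1..n}. \<lambda>g\<in>carrier G. fst (snd (wr_to_sym_ob n G x) (g, i))) = \<phi>s"
  proof
    fix i show "(\<lambda>i\<in>{1..n}. \<lambda>g\<in>carrier G. fst (snd (wr_to_sym_ob n G x) (g, i))) i = \<phi>s i"
    proof (cases "i \<in> {1..n}")
      case True
      show ?thesis
      proof
        fix g show "(\<lambda>i\<in>{1..n}. \<lambda>g\<in>carrier G. fst (snd (wr_to_sym_ob n G x) (g, i))) i g = \<phi>s i g"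
          using True auto_ext[OF au[OF True]] by (cases "g \<in> carrier G") (simp_all add: xx wr_ob_snd extensional_def)
      qed
    next
      case False thus ?thesis using extensional_arb[OF ex False] by (simp del: atLeastAtMost_iff)
    qed
  qed
  have "inv_ob n G (wr_to_sym_ob n G x) = (\<sigma>, \<phi>s)" unfolding inv_ob_def by (simp only: e1 e2)
  thus ?thesis using xx by simp
qed


lemma WA_src: "src WA (\<sigma>, fs) = (\<sigma>, \<lambda>i\<in>{1..n}. fst (fs i))"
  by (simp add: wreath_simps SymGrp_simps)
lemma WA_tgt: "tgt WA (\<sigma>, fs) = (\<sigma>, \<lambda>i\<in>{1..n}. conj_aut G (snd (fs i)) (fst (fs i)))"
  by (simp add: wreath_simps SymGrp_simps)

lemma wr_ar_eq: "wr_to_sym_ar n G (\<sigma>, fs) =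
   (wr_to_sym_ob n G (\<sigma>, \<lambda>i\<in>{1..n}. fst (fs i)), \<lambda>i\<in>{1..n}. (snd (fs i), \<sigma> i),
    wr_to_sym_ob n G (\<sigma>, \<lambda>i\<in>{1..n}. conj_aut G (snd (fs i)) (fst (fs i))))"
  by (simp add: wr_to_sym_ar_def WA_src WA_tgt)

lemma arr_parts:
  assumes "(\<sigma>, fs) \<in> Arr WA"
  shows "\<sigma> permutes {1..n}" "fs \<in> extensional {1..n}"
    "\<And>i. i \<in> {1..n} \<Longrightarrow> fst (fs i) \<in> auto G" "\<And>i. i \<in> {1..n} \<Longrightarrow> snd (fs i) \<in> carrier G"
  using assms unfolding WA_Arr by auto

lemma src_obj: assumes f: "f \<in> Arr WA" shows "src WA f \<in> Obj WA"
proof -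
  obtain \<sigma> fs where ff: "f = (\<sigma>, fs)" by (cases f)
  note p = arr_parts[OF f[unfolded ff]]
  show ?thesis unfolding ff WA_src WA_Obj using p by simp
qed

lemma tgt_obj: assumes f: "f \<in> Arr WA" shows "tgt WA f \<in> Obj WA"
proof -
  obtain \<sigma> fs where ff: "f = (\<sigma>, fs)" by (cases f)
  note p = arr_parts[OF f[unfolded ff]]
  show ?thesis unfolding ff WA_tgt WA_Obj using p conj_aut_auto by simp
qed

lemma ar_fwd:
  assumes f: "f \<in> Arr WA"
  shows "wr_to_sym_ar n G f \<in> Arr SB"
proof -
  obtain \<sigma> fs where ff: "f = (\<sigma>, fs)" by (cases f)
  note p = arr_parts[OF f[unfolded ff]]
  have si: "\<And>i. i \<in> {1..n} \<Longrightarrow> \<sigma> i \<in> {1..n}" using permutes_in_image[OF p(1)] by blast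
  let ?F = "wr_to_sym_ob n G (\<sigma>, \<lambda>i\<in>{1..n}. fst (fs i))"
  let ?G = "wr_to_sym_ob n G (\<sigma>, \<lambda>i\<in>{1..n}. conj_aut G (snd (fs i)) (fst (fs i)))"
  let ?a = "\<lambda>i\<in>{1..n}. (snd (fs i), \<sigma> i)"
  have F: "?F \<in> sym_obj K" using ob_fwd[OF src_obj[OF f]] by (simp add: ff WA_src)
  have G: "?G \<in> sym_obj K" using ob_fwd[OF tgt_obj[OF f]] by (simp add: ff WA_tgt)
  have ex: "?a \<in> extensional (Obj K)" by (simp add: coprod_simps)
  have ni: "nat_iso K K (fst ?F) (snd ?F) (fst ?G) (snd ?G) ?a"
    unfolding nat_iso_def
  proof (intro conjI ballI)
    fix x assume x: "x \<in> Obj K"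
    hence x': "x \<in> {1..n}" by (simp add: coprod_simps)
    show "?a x \<in> Arr K" using x' p(4) si by (simp add: coprod_simps)
    show "src K (?a x) = fst ?F x" using x' by (simp add: coprod_simps wr_ob_fst)
    show "tgt K (?a x) = fst ?G x" using x' by (simp add: coprod_simps wr_ob_fst)
    show "is_iso_arr K (?a x)" unfolding is_iso_arr_def
      using x' p(4)[OF x'] si[OF x']
      by (intro conjI bexI[of _ "(inv (snd (fs x)), \<sigma> x)"]) (simp_all add: coprod_simps)
  next
    fix h assume h: "h \<in> Arr K"
    then obtain k i where ki: "h = (k, i)" "k \<in> carrier G" "i \<in> {1..n}" by (auto simp: coprod_simps)
    have c: "fst (fs i) k \<in> carrier G" using auto_carr[OF p(3)[OF ki(3)] ki(2)] .
    show "cmp K (?a (tgt K h)) (snd ?F h) = cmp K (snd ?G h) (?a (src K h))"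
      using ki c p(4)[OF ki(3)] by (simp add: coprod_simps wr_ob_snd conj_aut_apply m_assoc)
  qed
  show ?thesis unfolding ff wr_ar_eq Sym_simps using F G ex ni by blast
qed


lemma ar_back:
  assumes g: "g \<in> Arr SB"
  shows "inv_ar n G g \<in> Arr WA" "wr_to_sym_ar n G (inv_ar n G g) = g"
proof -
  obtain F \<alpha> F' where gg: "g = (F, \<alpha>, F')" by (cases g)
  have F: "F \<in> sym_obj K" and F': "F' \<in> sym_obj K" and ex: "\<alpha> \<in> extensional {1..n}"
    and ni: "nat_iso K K (fst F) (snd F) (fst F') (snd F') \<alpha>"
    using g unfolding gg Sym_simps by (auto simp: coprod_simps)
  obtain \<sigma> \<phi>s where io: "inv_ob n G F = (\<sigma>, \<phi>s)" by (cases "inv_ob n G F")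
  have ob: "(\<sigma>, \<phi>s) \<in> Obj WA" and wF: "wr_to_sym_ob n G (\<sigma>, \<phi>s) = F"
    using ob_back[OF F] io by auto
  have perm: "\<sigma> permutes {1..n}" and exs: "\<phi>s \<in> extensional {1..n}" and au: "\<And>i. i \<in> {1..n} \<Longrightarrow> \<phi>s i \<in> auto G"
    using ob unfolding WA_Obj by auto
  have si: "\<And>i. i \<in> {1..n} \<Longrightarrow> \<sigma> i \<in> {1..n}" using permutes_in_image[OF perm] by blast
  have Fo: "\<And>i. i \<in> {1..n} \<Longrightarrow> fst F i = \<sigma> i" using wF wr_ob_fst by metis
  have Fm: "\<And>k i. k \<in> carrier G \<Longrightarrow> i \<in> {1..n} \<Longrightarrow> snd F (k, i) = (\<phi>s i k, \<sigma> i)" using wF wr_ob_snd by metis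
  have aA: "\<And>i. i \<in> {1..n} \<Longrightarrow> \<alpha> i \<in> carrier G \<times> {1..n} \<and> snd (\<alpha> i) = fst F i \<and> snd (\<alpha> i) = fst F' i"
    using ni unfolding nat_iso_def coprod_simps by blast
  have aN: "\<And>k i. k \<in> carrier G \<Longrightarrow> i \<in> {1..n} \<Longrightarrow>
      fst (\<alpha> i) \<otimes> fst (snd F (k, i)) = fst (snd F' (k, i)) \<otimes> fst (\<alpha> i)"
    using ni unfolding nat_iso_def coprod_simps by auto
  have ia: "inv_ar n G g = (\<sigma>, \<lambda>i\<in>{1..n}. (\<phi>s i, fst (\<alpha> i)))"
    unfolding inv_ar_def gg by (simp add: io)
  have aC: "fst (\<alpha> i) \<in> carrier G" if "i \<in> {1..n}" for i using aA[OF that] by (cases "\<alpha> i") auto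
  show "inv_ar n G g \<in> Arr WA" unfolding ia WA_Arr using perm au aC by auto
  have e1: "(\<lambda>i\<in>{1..n}. fst ((\<lambda>i\<in>{1..n}. (\<phi>s i, fst (\<alpha> i))) i)) = \<phi>s"
  proof
    fix i show "(\<lambda>i\<in>{1..n}. fst ((\<lambda>i\<in>{1..n}. (\<phi>s i, fst (\<alpha> i))) i)) i = \<phi>s i"
      using extensional_arb[OF exs, of i] by (cases "i \<in> {1..n}") (simp_all del: atLeastAtMost_iff)
  qed
  have e2: "(\<lambda>i\<in>{1..n}. (snd ((\<lambda>i\<in>{1..n}. (\<phi>s i, fst (\<alpha> i))) i), \<sigma> i)) = \<alpha>"
  proof
    fix i show "(\<lambda>i\<in>{1..n}. (snd ((\<lambda>i\<in>{1..n}. (\<phi>s i, fst (\<alpha> i))) i), \<sigma> i)) i = \<alpha> i"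
    proof (cases "i \<in> {1..n}")
      case True thus ?thesis using aA[OF True] Fo[OF True] by (simp add: prod_eq_iff)
    next
      case False thus ?thesis using extensional_arb[OF ex False] by (simp del: atLeastAtMost_iff)
    qed
  qed
  note an = ob_analysis[OF F']
  have e3: "wr_to_sym_ob n G (\<sigma>, \<lambda>i\<in>{1..n}. conj_aut G (snd ((\<lambda>i\<in>{1..n}. (\<phi>s i, fst (\<alpha> i))) i))
                 (fst ((\<lambda>i\<in>{1..n}. (\<phi>s i, fst (\<alpha> i))) i))) = F'"
    (is "wr_to_sym_ob n G (\<sigma>, ?ps) = F'")
  proof -
    have r1: "(\<lambda>i\<in>{1..n}. \<sigma> i) = fst F'"
    proof
      fix i show "(\<lambda>i\<in>{1..n}. \<sigma> i) i = fst F' i"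
      proof (cases "i \<in> {1..n}")
        case True thus ?thesis using aA[OF True] Fo[OF True] by simp
      next
        case False thus ?thesis using extensional_arb[OF an(1) False] by (simp del: atLeastAtMost_iff)
      qed
    qed
    have r2: "restrict (\<lambda>(g, i). (?ps i g, \<sigma> i)) (carrier G \<times> {1..n}) = snd F'"
    proof
      fix p show "restrict (\<lambda>(g, i). (?ps i g, \<sigma> i)) (carrier G \<times> {1..n}) p = snd F' p"
      proof (cases "p \<in> carrier G \<times> {1..n}")
        case True
        then obtain k i where p: "p = (k, i)" "k \<in> carrier G" "i \<in> {1..n}" by blast
        have a: "fst (\<alpha> i) \<in> carrier G" using aA[OF p(3)] by auto
        have c: "\<phi>s i k \<in> carrier G" using auto_carr[OF au[OF p(3)] p(2)] .
        have c': "fst (snd F' (k, i)) \<in> carrier G" using an(5)[OF p(2,3)] .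
        have nat: "fst (\<alpha> i) \<otimes> \<phi>s i k = fst (snd F' (k, i)) \<otimes> fst (\<alpha> i)"
          using aN[OF p(2,3)] Fm[OF p(2,3)] by simp
        have "fst (snd F' (k, i)) = fst (\<alpha> i) \<otimes> \<phi>s i k \<otimes> inv (fst (\<alpha> i))"
          using nat a c c' by (simp add: m_assoc)
        moreover have "snd F' (k, i) = (fst (snd F' (k, i)), fst F' i)" using an(4)[OF p(2,3)] .
        moreover have "fst F' i = \<sigma> i" using aA[OF p(3)] Fo[OF p(3)] by simp
        ultimately show ?thesis using p by (simp add: conj_aut_apply)
      next
        case False thus ?thesis using extensional_arb[OF an(2) False] by simp
      qed
    qed
    show ?thesis unfolding wr_ob_eq r1 r2 by simp
  qed
  show "wr_to_sym_ar n G (inv_ar n G g) = g"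
    unfolding ia wr_ar_eq e1 e2 e3 using wF gg by simp
qed

lemma ar_back2:
  assumes f: "f \<in> Arr WA"
  shows "inv_ar n G (wr_to_sym_ar n G f) = f"
proof -
  obtain \<sigma> fs where ff: "f = (\<sigma>, fs)" by (cases f)
  note p = arr_parts[OF f[unfolded ff]]
  have io: "inv_ob n G (wr_to_sym_ob n G (\<sigma>, \<lambda>i\<in>{1..n}. fst (fs i))) = (\<sigma>, \<lambda>i\<in>{1..n}. fst (fs i))"
    using ob_back2[OF src_obj[OF f]] by (simp add: ff WA_src)
  have e: "(\<lambda>i\<in>{1..n}. ((\<lambda>i\<in>{1..n}. fst (fs i)) i, fst ((\<lambda>i\<in>{1..n}. (snd (fs i), \<sigma> i)) i))) = fs"
  proof
    fix i show "(\<lambda>i\<in>{1..n}. ((\<lambda>i\<in>{1..n}. fst (fs i)) i, fst ((\<lambda>i\<in>{1..n}. (snd (fs i), \<sigma> i)) i))) i = fs i"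
      using extensional_arb[OF p(2), of i] by (cases "i \<in> {1..n}") (simp_all del: atLeastAtMost_iff)
  qed
  show ?thesis unfolding ff wr_ar_eq inv_ar_def fst_conv snd_conv io using e by simp
qed


lemma cmp_closed:
  assumes f: "f \<in> Arr WA" and g: "g \<in> Arr WA"
  shows "cmp WA g f \<in> Arr WA"
proof -
  obtain \<tau> fs where ff: "f = (\<tau>, fs)" by (cases f)
  obtain \<sigma> gs where gg: "g = (\<sigma>, gs)" by (cases g)
  note p = arr_parts[OF f[unfolded ff]] and q = arr_parts[OF g[unfolded gg]]
  show ?thesis unfolding ff gg wreath_simps(5) SymGrp_simps WA_Arr using p q by simp
qed

lemma idm_closed:
  assumes x: "x \<in> Obj WA"
  shows "idm WA x \<in> Arr WA"
proof -
  obtain \<sigma> \<phi>s where xx: "x = (\<sigma>, \<phi>s)" by (cases x)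
  have perm: "\<sigma> permutes {1..n}" and au: "\<And>i. i \<in> {1..n} \<Longrightarrow> \<phi>s i \<in> auto G"
    using x unfolding xx WA_Obj by auto
  show ?thesis unfolding xx wreath_simps(6) SymGrp_simps WA_Arr using perm au by simp
qed

lemma fwd_functor: "is_functor WA SB (wr_to_sym_ob n G) (wr_to_sym_ar n G)"
  unfolding is_functor_def
proof (intro conjI ballI impI)
  fix x assume x: "x \<in> Obj WA"
  show "wr_to_sym_ob n G x \<in> Obj SB" using ob_fwd[OF x] by (simp add: Sym_simps)
  obtain \<sigma> \<phi>s where xx: "x = (\<sigma>, \<phi>s)" by (cases x)
  have ex: "\<phi>s \<in> extensional {1..n}" and au: "\<And>i. i \<in> {1..n} \<Longrightarrow> \<phi>s i \<in> auto G"
    using x unfolding xx WA_Obj by auto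
  have e1: "(\<lambda>i\<in>{1..n}. fst ((\<lambda>i\<in>{1..n}. (\<phi>s i, \<one>)) i)) = \<phi>s"
  proof
    fix i show "(\<lambda>i\<in>{1..n}. fst ((\<lambda>i\<in>{1..n}. (\<phi>s i, \<one>)) i)) i = \<phi>s i"
      using extensional_arb[OF ex, of i] by (cases "i \<in> {1..n}") (simp_all del: atLeastAtMost_iff)
  qed
  have e2: "(\<lambda>i\<in>{1..n}. conj_aut G (snd ((\<lambda>i\<in>{1..n}. (\<phi>s i, \<one>)) i)) (fst ((\<lambda>i\<in>{1..n}. (\<phi>s i, \<one>)) i))) = \<phi>s"
  proof
    fix i show "(\<lambda>i\<in>{1..n}. conj_aut G (snd ((\<lambda>i\<in>{1..n}. (\<phi>s i, \<one>)) i)) (fst ((\<lambda>i\<in>{1..n}. (\<phi>s i, \<one>)) i))) i = \<phi>s i"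
      using extensional_arb[OF ex, of i] conj_aut_one[OF au, of i]
      by (cases "i \<in> {1..n}") (simp_all del: atLeastAtMost_iff)
  qed
  have e3: "(\<lambda>i\<in>{1..n}. (snd ((\<lambda>i\<in>{1..n}. (\<phi>s i, \<one>)) i), \<sigma> i)) =
            (\<lambda>i\<in>Obj K. idm K (fst (wr_to_sym_ob n G (\<sigma>, \<phi>s)) i))"
    unfolding coprod_simps by (rule restrict_ext) (simp_all add: wr_ob_fst)
  show "wr_to_sym_ar n G (idm WA x) = idm SB (wr_to_sym_ob n G x)"
    unfolding xx wreath_simps(6) SymGrp_simps wr_ar_eq e1 e2 e3 by (simp add: Sym_simps)
next
  fix f assume f: "f \<in> Arr WA"
  show "wr_to_sym_ar n G f \<in> Arr SB" using ar_fwd[OF f] .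
  obtain \<tau> fs where ff: "f = (\<tau>, fs)" by (cases f)
  show "src SB (wr_to_sym_ar n G f) = wr_to_sym_ob n G (src WA f)"
    unfolding ff wr_ar_eq WA_src Sym_simps ..
  show "tgt SB (wr_to_sym_ar n G f) = wr_to_sym_ob n G (tgt WA f)"
    unfolding ff wr_ar_eq WA_tgt Sym_simps ..
  fix g assume g: "g \<in> Arr WA" and sg: "src WA g = tgt WA f"
  obtain \<sigma> gs where gg: "g = (\<sigma>, gs)" by (cases g)
  note p = arr_parts[OF f[unfolded ff]] and q = arr_parts[OF g[unfolded gg]]
  have st: "\<sigma> = \<tau>" using sg unfolding ff gg WA_src WA_tgt by simp
  have sr: "(\<lambda>i\<in>{1..n}. fst (gs i)) = (\<lambda>i\<in>{1..n}. conj_aut G (snd (fs i)) (fst (fs i)))"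
    using sg unfolding ff gg WA_src WA_tgt by simp
  have fg: "fst (gs i) = conj_aut G (snd (fs i)) (fst (fs i))" if "i \<in> {1..n}" for i
    using fun_cong[OF sr, of i] that by simp
  let ?hs = "\<lambda>i\<in>{1..n}. (fst (fs i), snd (gs i) \<otimes> snd (fs i))"
  have c: "cmp WA g f = (\<sigma>, ?hs)" unfolding ff gg wreath_simps(5) SymGrp_simps by simp
  have A: "(\<lambda>i\<in>{1..n}. fst (?hs i)) = (\<lambda>i\<in>{1..n}. fst (fs i))" by (rule restrict_ext) simp
  have B: "(\<lambda>i\<in>{1..n}. (snd (?hs i), \<sigma> i)) =
      (\<lambda>x\<in>Obj K. cmp K ((\<lambda>i\<in>{1..n}. (snd (gs i), \<sigma> i)) x) ((\<lambda>i\<in>{1..n}. (snd (fs i), \<tau> i)) x))"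
    unfolding coprod_simps(1) by (rule restrict_ext) (simp_all add: coprod_simps st)
  have C: "(\<lambda>i\<in>{1..n}. conj_aut G (snd (?hs i)) (fst (?hs i))) = (\<lambda>i\<in>{1..n}. conj_aut G (snd (gs i)) (fst (gs i)))"
  proof (rule restrict_ext)
    fix i assume i: "i \<in> {1..n}"
    show "conj_aut G (snd (?hs i)) (fst (?hs i)) = conj_aut G (snd (gs i)) (fst (gs i))"
      using i fg[OF i] conj_aut_mult[OF q(4)[OF i] p(4)[OF i] auto_carr[OF p(3)[OF i]]] by simp
  qed
  show "wr_to_sym_ar n G (cmp WA g f) = cmp SB (wr_to_sym_ar n G g) (wr_to_sym_ar n G f)"
    unfolding c wr_ar_eq A C unfolding ff gg wr_ar_eq Sym_simps B unfolding st ..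
qed

lemma tob_pres:
  assumes x: "x \<in> Obj WA" and y: "y \<in> Obj WA"
  shows "wr_to_sym_ob n G (tob WA x y) = sym_tob K (wr_to_sym_ob n G x) (wr_to_sym_ob n G y)"
proof -
  obtain \<sigma> \<phi>s where xx: "x = (\<sigma>, \<phi>s)" by (cases x)
  obtain \<sigma>' \<psi>s where yy: "y = (\<sigma>', \<psi>s)" by (cases y)
  have perm': "\<sigma>' permutes {1..n}" and au': "\<And>i. i \<in> {1..n} \<Longrightarrow> \<psi>s i \<in> auto G"
    using y unfolding yy WA_Obj by auto
  have si: "\<And>i. i \<in> {1..n} \<Longrightarrow> \<sigma>' i \<in> {1..n}" using permutes_in_image[OF perm'] by blast
  have t: "tob WA x y = (\<sigma> \<circ> \<sigma>', \<lambda>i\<in>{1..n}. compose (carrier G) (\<phi>s (\<sigma>' i)) (\<psi>s i))"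
    unfolding xx yy wreath_simps(7) SymGrp_simps ..
  have e1: "(\<lambda>i\<in>{1..n}. (\<sigma> \<circ> \<sigma>') i) = compose (Obj K) (fst (wr_to_sym_ob n G x)) (fst (wr_to_sym_ob n G y))"
    unfolding compose_def coprod_simps
    apply (rule restrict_ext)
    subgoal for i using wr_ob_fst[of i] wr_ob_fst[of "\<sigma>' i"] si[of i] by (simp add: xx yy)
    done
  have e2: "restrict (\<lambda>(g, i). ((\<lambda>i\<in>{1..n}. compose (carrier G) (\<phi>s (\<sigma>' i)) (\<psi>s i)) i g, (\<sigma> \<circ> \<sigma>') i)) (carrier G \<times> {1..n})
      = compose (Arr K) (snd (wr_to_sym_ob n G x)) (snd (wr_to_sym_ob n G y))"
    unfolding coprod_simps unfolding compose_def[of "carrier G \<times> {1..n}"]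
  proof (rule restrict_ext)
    fix p assume p: "p \<in> carrier G \<times> {1..n}"
    then obtain k i where ki: "p = (k, i)" "k \<in> carrier G" "i \<in> {1..n}" by blast
    have c: "\<psi>s i k \<in> carrier G" using auto_carr[OF au'[OF ki(3)] ki(2)] .
    show "(case p of (g, i) \<Rightarrow> ((\<lambda>i\<in>{1..n}. compose (carrier G) (\<phi>s (\<sigma>' i)) (\<psi>s i)) i g, (\<sigma> \<circ> \<sigma>') i)) =
        snd (wr_to_sym_ob n G x) (snd (wr_to_sym_ob n G y) p)"
      using ki c si[OF ki(3)] by (simp add: xx yy wr_ob_snd compose_def)
  qed
  show ?thesis unfolding t wr_ob_eq e1 e2 sym_tob_def ..
qed

lemma tunit_pres: "wr_to_sym_ob n G (tunit WA) = tunit SB"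
proof -
  have e1: "(\<lambda>i\<in>{1..n}. id i) = (\<lambda>x\<in>Obj K. x)" unfolding coprod_simps by (rule restrict_ext) simp
  have e2: "restrict (\<lambda>(g, i). ((\<lambda>i\<in>{1..n}. tunit (SymGrp G)) i g, id i)) (carrier G \<times> {1..n}) = (\<lambda>f\<in>Arr K. f)"
    unfolding coprod_simps by (rule restrict_ext) (auto simp: SymGrp_simps)
  show ?thesis unfolding wreath_simps(9) wr_ob_eq e1 e2 Sym_simps ..
qed


lemma tar_pres:
  assumes f: "f \<in> Arr WA" and f': "f' \<in> Arr WA"
  shows "wr_to_sym_ar n G (tar WA f f') = tar SB (wr_to_sym_ar n G f) (wr_to_sym_ar n G f')"
proof -
  obtain \<sigma> fs where ff: "f = (\<sigma>, fs)" by (cases f)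
  obtain \<sigma>' fs' where ff': "f' = (\<sigma>', fs')" by (cases f')
  note p = arr_parts[OF f[unfolded ff]] and q = arr_parts[OF f'[unfolded ff']]
  have si: "\<And>i. i \<in> {1..n} \<Longrightarrow> \<sigma>' i \<in> {1..n}" using permutes_in_image[OF q(1)] by blast
  let ?hs = "\<lambda>i\<in>{1..n}. (compose (carrier G) (fst (fs (\<sigma>' i))) (fst (fs' i)), snd (fs (\<sigma>' i)) \<otimes> fst (fs (\<sigma>' i)) (snd (fs' i)))"
  have t: "tar WA f f' = (\<sigma> \<circ> \<sigma>', ?hs)" unfolding ff ff' wreath_simps(8) SymGrp_simps ..
  have A: "(\<sigma> \<circ> \<sigma>', \<lambda>i\<in>{1..n}. fst (?hs i)) = tob WA (src WA f) (src WA f')"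
    unfolding ff ff' WA_src wreath_simps(7) SymGrp_simps
    apply (simp only: prod.inject simp_thms)
    apply (rule restrict_ext)
    subgoal for i using si[of i] by simp
    done
  have C: "(\<sigma> \<circ> \<sigma>', \<lambda>i\<in>{1..n}. conj_aut G (snd (?hs i)) (fst (?hs i))) = tob WA (tgt WA f) (tgt WA f')"
    unfolding ff ff' WA_tgt wreath_simps(7) SymGrp_simps
    apply (simp only: prod.inject simp_thms)
    apply (rule restrict_ext)
    subgoal for i using si[of i] conj_aut_compose[OF p(3)[OF si[of i]] q(3)[of i] p(4)[OF si[of i]] q(4)[of i]] by simp
    done
  have B: "(\<lambda>i\<in>{1..n}. (snd (?hs i), (\<sigma> \<circ> \<sigma>') i)) =
     (\<lambda>x\<in>Obj K. cmp K ((\<lambda>i\<in>{1..n}. (snd (fs i), \<sigma> i)) (fst (wr_to_sym_ob n G (\<sigma>', \<lambda>i\<in>{1..n}. conj_aut G (snd (fs' i)) (fst (fs' i)))) x))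
        (snd (wr_to_sym_ob n G (\<sigma>, \<lambda>i\<in>{1..n}. fst (fs i))) ((\<lambda>i\<in>{1..n}. (snd (fs' i), \<sigma>' i)) x)))"
    unfolding coprod_simps(1)
    apply (rule restrict_ext)
    subgoal for i using si[of i] q(4)[of i] wr_ob_fst[of i] wr_ob_snd[of "snd (fs' i)" "\<sigma>' i"] by (simp add: coprod_simps)
    done
  have tS: "tob SB = sym_tob K" by (simp add: Sym_simps)
  show ?thesis
    unfolding t wr_ar_eq A C tob_pres[OF src_obj[OF f] src_obj[OF f']] tob_pres[OF tgt_obj[OF f] tgt_obj[OF f']]
    unfolding B unfolding ff ff' WA_src WA_tgt wr_ar_eq Sym_simps ..
qed

end

theorem proposition4p13:
  fixes n :: nat and G :: "('g, 'b) monoid_scheme"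
  assumes "n \<ge> 1" and "group G"
  shows "strict_iso (wreath n (SymGrp G)) (Sym (coprod n G)) (wr_to_sym_ob n G) (wr_to_sym_ar n G)"
proof -
  interpret wrc G n by (rule wrc.intro) (rule assms(2))
  have inv: "is_functor SB WA (inv_ob n G) (inv_ar n G)"
  proof (rule inverse_functor[OF fwd_functor])
    show "\<And>y. y \<in> Obj SB \<Longrightarrow> inv_ob n G y \<in> Obj WA" using ob_back(1) by (simp add: Sym_simps)
    show "\<And>g. g \<in> Arr SB \<Longrightarrow> inv_ar n G g \<in> Arr WA" using ar_back(1) by blast
    show "\<And>x. x \<in> Obj WA \<Longrightarrow> inv_ob n G (wr_to_sym_ob n G x) = x" using ob_back2 by blast
    show "\<And>y. y \<in> Obj SB \<Longrightarrow> wr_to_sym_ob n G (inv_ob n G y) = y" using ob_back(2) by (simp add: Sym_simps)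
    show "\<And>f. f \<in> Arr WA \<Longrightarrow> inv_ar n G (wr_to_sym_ar n G f) = f" using ar_back2 by blast
    show "\<And>g. g \<in> Arr SB \<Longrightarrow> wr_to_sym_ar n G (inv_ar n G g) = g" using ar_back(2) by blast
    show "\<And>f g. f \<in> Arr WA \<Longrightarrow> g \<in> Arr WA \<Longrightarrow> src WA g = tgt WA f \<Longrightarrow> cmp WA g f \<in> Arr WA"
      using cmp_closed by blast
    show "\<And>x. x \<in> Obj WA \<Longrightarrow> idm WA x \<in> Arr WA" using idm_closed by blast
    show "\<And>f. f \<in> Arr WA \<Longrightarrow> src WA f \<in> Obj WA" using src_obj by blast
    show "\<And>f. f \<in> Arr WA \<Longrightarrow> tgt WA f \<in> Obj WA" using tgt_obj by blast
  qed
  have ex: "\<exists>Go Gm. is_functor SB WA Go Gm \<and>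
        (\<forall>x\<in>Obj WA. Go (wr_to_sym_ob n G x) = x) \<and> (\<forall>f\<in>Arr WA. Gm (wr_to_sym_ar n G f) = f) \<and>
        (\<forall>y\<in>Obj SB. wr_to_sym_ob n G (Go y) = y) \<and> (\<forall>g\<in>Arr SB. wr_to_sym_ar n G (Gm g) = g)"
    apply (rule exI[of _ "inv_ob n G"], rule exI[of _ "inv_ar n G"])
    using inv ob_back2 ar_back2 ob_back(2) ar_back(2) by (simp add: Sym_simps)
  show ?thesis unfolding strict_iso_def
  proof (intro conjI ballI)
    show "is_functor WA SB (wr_to_sym_ob n G) (wr_to_sym_ar n G)" by (rule fwd_functor)
    show "\<exists>Go Gm. is_functor SB WA Go Gm \<and>
        (\<forall>x\<in>Obj WA. Go (wr_to_sym_ob n G x) = x) \<and> (\<forall>f\<in>Arr WA. Gm (wr_to_sym_ar n G f) = f) \<and>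
        (\<forall>y\<in>Obj SB. wr_to_sym_ob n G (Go y) = y) \<and> (\<forall>g\<in>Arr SB. wr_to_sym_ar n G (Gm g) = g)" by (rule ex)
    show "\<And>x y. x \<in> Obj WA \<Longrightarrow> y \<in> Obj WA \<Longrightarrow> wr_to_sym_ob n G (tob WA x y) = tob SB (wr_to_sym_ob n G x) (wr_to_sym_ob n G y)"
      using tob_pres by (simp add: Sym_simps)
    show "\<And>f g. f \<in> Arr WA \<Longrightarrow> g \<in> Arr WA \<Longrightarrow> wr_to_sym_ar n G (tar WA f g) = tar SB (wr_to_sym_ar n G f) (wr_to_sym_ar n G g)"
      using tar_pres by blast
    show "wr_to_sym_ob n G (tunit WA) = tunit SB" by (rule tunit_pres)
  qed
qed

end
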